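(* Let $k\geq 2$, let $G$ be a graph of order $n$, and let $w$ be a vertex of $G$. Suppose that every connected component $C$ of $G-w$ satisfies either $v(C)=2k$ or $e(C)\leq (k-1)\,v(C)$. If $n\geq 6k+13$, then $q(G)<n+2k-2$.
   Context: All graphs are finite and simple. $G-w$ is the graph obtained from $G$ by deleting the vertex $w$. $v(C)$ and $e(C)$ are the numbers of vertices and edges of $C$. For a graph $G$, the signless Laplacian is $Q(G)=D(G)+A(G)$, where $D(G)$ is the diagonal matrix of vertex degrees and $A(G)$ is the adjacency matrix; $q(G)$ denotes the largest eigenvalue of $Q(G)$. *)

theory Defs
  imports Main "HOL-Analysis.Analysis"
begin

definition simple_graph :: "'a set \<Rightarrow> 'a set set \<Rightarrow> bool" where
  "simple_graph V E \<longleftrightarrow> finite V \<and> (\<forall>e\<in>E. e \<subseteq> V \<and> card e = 2)"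

definition adj :: "'a set set \<Rightarrow> 'a \<Rightarrow> 'a \<Rightarrow> bool" where
  "adj E u v \<longleftrightarrow> {u, v} \<in> E"

definition degree :: "'a set set \<Rightarrow> 'a \<Rightarrow> nat" where
  "degree E v = card {e\<in>E. v \<in> e}"

definition signless_laplacian :: "'a set set \<Rightarrow> 'a \<Rightarrow> 'a \<Rightarrow> real" where
  "signless_laplacian E u v =
     (if u = v then real (degree E u) else 0) + (if adj E u v then 1 else 0)"

definition is_eigenvalue :: "'a set \<Rightarrow> ('a \<Rightarrow> 'a \<Rightarrow> real) \<Rightarrow> real \<Rightarrow> bool" where
  "is_eigenvalue V M mu \<longleftrightarrow>
     (\<exists>x :: 'a \<Rightarrow> real. (\<exists>v\<in>V. x v \<noteq> 0) \<and>
        (\<forall>u\<in>V. (\<Sum>v\<in>V. M u v * x v) = mu * x u))"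

definition q_index :: "'a set \<Rightarrow> 'a set set \<Rightarrow> real" where
  "q_index V E = Max {mu. is_eigenvalue V (signless_laplacian E) mu}"

definition del_vertex_V :: "'a set \<Rightarrow> 'a \<Rightarrow> 'a set" where
  "del_vertex_V V w = V - {w}"

definition del_vertex_E :: "'a set set \<Rightarrow> 'a \<Rightarrow> 'a set set" where
  "del_vertex_E E w = {e\<in>E. w \<notin> e}"

definition reachable :: "'a set \<Rightarrow> 'a set set \<Rightarrow> 'a \<Rightarrow> 'a \<Rightarrow> bool" where
  "reachable V E = (\<lambda>u v. u \<in> V \<and> v \<in> V \<and> adj E u v)\<^sup>*\<^sup>*"

definition components :: "'a set \<Rightarrow> 'a set set \<Rightarrow> 'a set set" where
  "components V E = {{v\<in>V. reachable V E u v} | u. u \<in> V}"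

definition edges_in :: "'a set set \<Rightarrow> 'a set \<Rightarrow> nat" where
  "edges_in E C = card {e\<in>E. e \<subseteq> C}"

end

theory Submission
  imports Defs "Jordan_Normal_Form.Char_Poly"
begin

lemma cw_bound:
  fixes M :: "'a \<Rightarrow> 'a \<Rightarrow> real" and z :: "'a \<Rightarrow> real"
  assumes fin: "finite V"
    and nonneg: "\<And>u v. u\<in>V \<Longrightarrow> v\<in>V \<Longrightarrow> M u v \<ge> 0"
    and sym: "\<And>u v. u\<in>V \<Longrightarrow> v\<in>V \<Longrightarrow> M u v = M v u"
    and zpos: "\<And>u. u\<in>V \<Longrightarrow> z u > 0"
    and row: "\<And>u. u\<in>V \<Longrightarrow> (\<Sum>v\<in>V. M u v * z v) < T * z u"
    and ev: "is_eigenvalue V M \<mu>"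
  shows "\<mu> < T"
proof -
  obtain x where x0: "\<exists>v\<in>V. x v \<noteq> 0" and xe: "\<forall>u\<in>V. (\<Sum>v\<in>V. M u v * x v) = \<mu> * x u"
    using ev unfolding is_eigenvalue_def by blast
  obtain v0 where v0: "v0 \<in> V" "x v0 \<noteq> 0" using x0 by blast
  have Tpos: "T > 0"
  proof -
    have "0 \<le> (\<Sum>v\<in>V. M v0 v * z v)"
      by (intro sum_nonneg mult_nonneg_nonneg) (auto simp: nonneg v0 zpos less_imp_le)
    also have "\<dots> < T * z v0" by (rule row[OF v0(1)])
    finally show ?thesis using zpos[OF v0(1)] by (simp add: zero_less_mult_iff)
  qed
  show ?thesis
  proof (cases "\<mu> \<le> 0")
    case True then show ?thesis using Tpos by linarith
  next
    case False
    have sub: "\<mu> * \<bar>x u\<bar> \<le> (\<Sum>v\<in>V. M u v * \<bar>x v\<bar>)" if u: "u \<in> V" for u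
    proof -
      have "\<mu> * \<bar>x u\<bar> = \<bar>\<mu> * x u\<bar>" using False by (simp add: abs_mult)
      also have "\<dots> = \<bar>\<Sum>v\<in>V. M u v * x v\<bar>" using xe u by simp
      also have "\<dots> \<le> (\<Sum>v\<in>V. \<bar>M u v * x v\<bar>)" by (rule sum_abs)
      also have "\<dots> = (\<Sum>v\<in>V. M u v * \<bar>x v\<bar>)"
        by (rule sum.cong) (auto simp: abs_mult nonneg u)
      finally show ?thesis .
    qed
    have "\<mu> * (\<Sum>u\<in>V. z u * \<bar>x u\<bar>) = (\<Sum>u\<in>V. z u * (\<mu> * \<bar>x u\<bar>))"
      by (simp add: sum_distrib_left algebra_simps)
    also have "\<dots> \<le> (\<Sum>u\<in>V. z u * (\<Sum>v\<in>V. M u v * \<bar>x v\<bar>))"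
      by (intro sum_mono mult_left_mono sub) (auto simp: zpos less_imp_le)
    also have "\<dots> = (\<Sum>u\<in>V. \<Sum>v\<in>V. z u * M u v * \<bar>x v\<bar>)"
      by (simp add: sum_distrib_left algebra_simps)
    also have "\<dots> = (\<Sum>v\<in>V. \<Sum>u\<in>V. z u * M u v * \<bar>x v\<bar>)" by (rule sum.swap)
    also have "\<dots> = (\<Sum>v\<in>V. \<bar>x v\<bar> * (\<Sum>u\<in>V. M v u * z u))"
      by (rule sum.cong) (auto simp: sum_distrib_left algebra_simps sym intro!: sum.cong)
    also have "\<dots> < (\<Sum>v\<in>V. \<bar>x v\<bar> * (T * z v))"
    proof (rule sum_strict_mono_ex1[OF fin])
      show "\<forall>v\<in>V. \<bar>x v\<bar> * (\<Sum>u\<in>V. M v u * z u) \<le> \<bar>x v\<bar> * (T * z v)"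
        using row by (intro ballI mult_left_mono) (auto simp: less_imp_le)
      show "\<exists>v\<in>V. \<bar>x v\<bar> * (\<Sum>u\<in>V. M v u * z u) < \<bar>x v\<bar> * (T * z v)"
      proof
        show "v0 \<in> V" by (rule v0(1))
        show "\<bar>x v0\<bar> * (\<Sum>u\<in>V. M v0 u * z u) < \<bar>x v0\<bar> * (T * z v0)"
          using v0 row[OF v0(1)] by (simp add: mult_strict_left_mono)
      qed
    qed
    also have "\<dots> = T * (\<Sum>u\<in>V. z u * \<bar>x u\<bar>)"
      by (simp add: sum_distrib_left algebra_simps)
    finally have lt: "\<mu> * (\<Sum>u\<in>V. z u * \<bar>x u\<bar>) < T * (\<Sum>u\<in>V. z u * \<bar>x u\<bar>)" .
    have "(\<Sum>u\<in>V. z u * \<bar>x u\<bar>) > 0"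
    proof (rule sum_pos2[OF fin v0(1)])
      show "0 < z v0 * \<bar>x v0\<bar>" using zpos[OF v0(1)] v0(2) by simp
      show "\<And>i. i \<in> V \<Longrightarrow> 0 \<le> z i * \<bar>x i\<bar>" using zpos by (simp add: less_imp_le)
    qed
    then show ?thesis using lt by simp
  qed
qed

lemma mv_index:
  assumes "i < n" "dim_vec v = n"
  shows "(mat n n (\<lambda>(i,j). a i j) *\<^sub>v v) $ i = (\<Sum>j\<in>{0..<n}. a i j * v $ j)"
  using assms by (simp add: scalar_prod_def)

lemma eig_finite:
  fixes M :: "'a \<Rightarrow> 'a \<Rightarrow> real"
  assumes fin: "finite V"
  shows "finite {\<mu>. is_eigenvalue V M \<mu>}"
proof -
  define n where "n = card V"
  obtain f where bij: "bij_betw f {0..<n} V" using ex_bij_betw_nat_finite[OF fin] n_def by blast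
  define B where "B = mat n n (\<lambda>(i,j). M (f i) (f j))"
  have B: "B \<in> carrier_mat n n" unfolding B_def by simp
  have sub: "{\<mu>. is_eigenvalue V M \<mu>} \<subseteq> {\<mu>. poly (char_poly B) \<mu> = 0}"
  proof
    fix \<mu> assume "\<mu> \<in> {\<mu>. is_eigenvalue V M \<mu>}"
    then obtain x where x0: "\<exists>v\<in>V. x v \<noteq> 0" and xe: "\<forall>u\<in>V. (\<Sum>v\<in>V. M u v * x v) = \<mu> * x u"
      unfolding is_eigenvalue_def by blast
    define y where "y = vec n (\<lambda>i. x (f i))"
    have "eigenvector B y \<mu>"
      unfolding eigenvector_def
    proof (intro conjI)
      show "y \<in> carrier_vec (dim_row B)" unfolding y_def B_def by simp
      obtain v where v: "v \<in> V" "x v \<noteq> 0" using x0 by blast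
      then obtain i where i: "i < n" "f i = v" using bij unfolding bij_betw_def by force
      show "y \<noteq> 0\<^sub>v (dim_row B)"
      proof
        assume "y = 0\<^sub>v (dim_row B)"
        then have "y $ i = 0" using i unfolding B_def by simp
        then show False using i v unfolding y_def by simp
      qed
      show "B *\<^sub>v y = \<mu> \<cdot>\<^sub>v y"
      proof (rule eq_vecI)
        fix i assume "i < dim_vec (\<mu> \<cdot>\<^sub>v y)"
        then have i: "i < n" unfolding y_def by simp
        have fi: "f i \<in> V" using bij i unfolding bij_betw_def by auto
        have "(B *\<^sub>v y) $ i = (\<Sum>j\<in>{0..<n}. M (f i) (f j) * x (f j))"
          unfolding B_def using i by (simp add: scalar_prod_def y_def)
        also have "\<dots> = (\<Sum>v\<in>V. M (f i) v * x v)"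
          using sum.reindex_bij_betw[OF bij, of "\<lambda>v. M (f i) v * x v"] by simp
        also have "\<dots> = \<mu> * x (f i)" using xe fi by simp
        finally show "(B *\<^sub>v y) $ i = (\<mu> \<cdot>\<^sub>v y) $ i" using i unfolding y_def by simp
      next
        show "dim_vec (B *\<^sub>v y) = dim_vec (\<mu> \<cdot>\<^sub>v y)" unfolding B_def y_def by simp
      qed
    qed
    then have "eigenvalue B \<mu>" unfolding eigenvalue_def by blast
    then show "\<mu> \<in> {\<mu>. poly (char_poly B) \<mu> = 0}"
      using eigenvalue_root_char_poly[OF B] by simp
  qed
  have "char_poly B \<noteq> 0"
  proof
    assume "char_poly B = 0"
    then show False using degree_monic_char_poly[OF B] by simp
  qed
  then show ?thesis using poly_roots_finite finite_subset[OF sub] by blast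
qed


lemma eig_from_index:
  fixes M :: "'a \<Rightarrow> 'a \<Rightarrow> real" and n :: nat
  assumes bij: "bij_betw f {0..<n} V"
    and eq: "\<And>i. i < n \<Longrightarrow> (\<Sum>j=0..<n. M (f i) (f j) * y j) = \<mu> * y i"
    and nz: "i0 < n" "y i0 \<noteq> 0"
  shows "is_eigenvalue V M \<mu>"
proof -
  define g where "g = inv_into {0..<n} f"
  have gf: "\<And>j. j < n \<Longrightarrow> g (f j) = j" unfolding g_def
    using bij by (auto simp: bij_betw_def intro!: inv_into_f_f)
  have fg: "\<And>u. u \<in> V \<Longrightarrow> f (g u) = u" unfolding g_def
    using bij by (simp add: bij_betw_def f_inv_into_f)
  have gV: "\<And>u. u \<in> V \<Longrightarrow> g u < n" unfolding g_def
    using bij by (metis atLeastLessThan_iff bij_betw_def inv_into_into)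
  have fV: "\<And>j. j < n \<Longrightarrow> f j \<in> V" using bij unfolding bij_betw_def by auto
  show ?thesis unfolding is_eigenvalue_def
  proof (intro exI[of _ "\<lambda>u. y (g u)"] conjI ballI)
    show "\<exists>v\<in>V. y (g v) \<noteq> 0" using nz fV gf by (intro bexI[of _ "f i0"]) auto
  next
    fix u assume u: "u \<in> V"
    have "(\<Sum>v\<in>V. M u v * y (g v)) = (\<Sum>j=0..<n. M u (f j) * y (g (f j)))"
      using sum.reindex_bij_betw[OF bij, of "\<lambda>v. M u v * y (g v)"] by simp
    also have "\<dots> = (\<Sum>j=0..<n. M (f (g u)) (f j) * y j)"
      by (rule sum.cong) (auto simp: gf fg u)
    also have "\<dots> = \<mu> * y (g u)" using eq gV u by blast
    finally show "(\<Sum>v\<in>V. M u v * y (g v)) = \<mu> * y (g u)" .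
  qed
qed

lemma eig_exists:
  fixes M :: "'a \<Rightarrow> 'a \<Rightarrow> real"
  assumes fin: "finite V" and ne: "V \<noteq> {}"
    and sym: "\<And>u v. u\<in>V \<Longrightarrow> v\<in>V \<Longrightarrow> M u v = M v u"
  shows "\<exists>\<mu>. is_eigenvalue V M \<mu>"
proof -
  define n where "n = card V"
  have npos: "n > 0" using fin ne n_def by (simp add: card_gt_0_iff)
  obtain f where bij: "bij_betw f {0..<n} V" using ex_bij_betw_nat_finite[OF fin] n_def by blast
  have fV: "\<And>j. j < n \<Longrightarrow> f j \<in> V" using bij unfolding bij_betw_def by auto
  define a where "a i j = M (f i) (f j)" for i j
  have asym: "\<And>i j. i < n \<Longrightarrow> j < n \<Longrightarrow> a i j = a j i"
    unfolding a_def using sym fV by blast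
  define A :: "complex mat" where "A = mat n n (\<lambda>(i,j). complex_of_real (a i j))"
  have A: "A \<in> carrier_mat n n" unfolding A_def by simp
  have "Polynomial.degree (char_poly A) = n" using degree_monic_char_poly[OF A] by simp
  then have "\<not> constant (poly (char_poly A))" using npos by (simp add: constant_degree)
  then obtain l where "poly (char_poly A) l = 0" using fundamental_theorem_of_algebra by blast
  then have "eigenvalue A l" using eigenvalue_root_char_poly[OF A] by simp
  then obtain v where v: "eigenvector A v l" unfolding eigenvalue_def by blast
  then have vc: "v \<in> carrier_vec n" and vnz: "v \<noteq> 0\<^sub>v n" and Av: "A *\<^sub>v v = l \<cdot>\<^sub>v v"
    unfolding eigenvector_def A_def by auto
  define c where "c i = v $ i" for i
  have eq: "(\<Sum>j=0..<n. complex_of_real (a i j) * c j) = l * c i" if i: "i < n" for i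
  proof -
    have "(A *\<^sub>v v) $ i = (l \<cdot>\<^sub>v v) $ i" using Av by simp
    then show ?thesis using i vc unfolding A_def c_def by (simp add: scalar_prod_def)
  qed
  obtain i0 where i0: "i0 < n" "c i0 \<noteq> 0"
  proof -
    have "\<exists>i<n. c i \<noteq> 0"
    proof (rule ccontr)
      assume "\<not> (\<exists>i<n. c i \<noteq> 0)"
      then have "v = 0\<^sub>v n" using vc unfolding c_def by (intro eq_vecI) auto
      then show False using vnz by simp
    qed
    then show ?thesis using that by blast
  qed
  define r where "r = (\<Sum>i=0..<n. (cmod (c i))^2)"
  have rpos: "r > 0" unfolding r_def
    by (rule sum_pos2[of _ i0]) (use i0 in auto)
  define s where "s = (\<Sum>i=0..<n. cnj (c i) * (\<Sum>j=0..<n. complex_of_real (a i j) * c j))"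
  have s1: "s = l * complex_of_real r"
  proof -
    have "s = (\<Sum>i=0..<n. l * (cnj (c i) * c i))" unfolding s_def
      by (rule sum.cong) (auto simp: eq)
    also have "\<dots> = l * (\<Sum>i=0..<n. complex_of_real ((cmod (c i))^2))"
    proof -
      have nz: "\<And>z. cnj z * z = complex_of_real ((cmod z)^2)"
        by (simp add: complex_norm_square mult.commute del: of_real_power)
      show ?thesis by (simp add: sum_distrib_left nz del: of_real_power)
    qed
    finally show ?thesis unfolding r_def by simp
  qed
  have s2: "cnj s = s"
  proof -
    have "cnj s = (\<Sum>i=0..<n. \<Sum>j=0..<n. complex_of_real (a i j) * (c i * cnj (c j)))"
      unfolding s_def by (simp add: sum_distrib_left algebra_simps)
    also have "\<dots> = (\<Sum>j=0..<n. \<Sum>i=0..<n. complex_of_real (a i j) * (c i * cnj (c j)))"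
      by (rule sum.swap)
    also have "\<dots> = (\<Sum>j=0..<n. \<Sum>i=0..<n. complex_of_real (a j i) * (cnj (c j) * c i))"
      by (intro sum.cong refl) (auto simp: asym mult.commute)
    also have "\<dots> = s" unfolding s_def by (simp add: sum_distrib_left algebra_simps)
    finally show ?thesis .
  qed
  have "Im s = 0" using arg_cong[OF s2, of Im] by simp
  then have "Im l * r = 0" using s1 by simp
  then have Iml: "Im l = 0" using rpos by simp
  have eqR: "(\<Sum>j=0..<n. M (f i) (f j) * Re (c j)) = Re l * Re (c i)" if i: "i < n" for i
  proof -
    have "Re (\<Sum>j=0..<n. complex_of_real (a i j) * c j) = Re (l * c i)" using eq[OF i] by simp
    then show ?thesis using Iml unfolding a_def by simp
  qed
  have eqI: "(\<Sum>j=0..<n. M (f i) (f j) * Im (c j)) = Re l * Im (c i)" if i: "i < n" for i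
  proof -
    have "Im (\<Sum>j=0..<n. complex_of_real (a i j) * c j) = Im (l * c i)" using eq[OF i] by simp
    then show ?thesis using Iml unfolding a_def by simp
  qed
  show ?thesis
  proof (cases "Re (c i0) = 0")
    case False
    then show ?thesis using eig_from_index[OF bij eqR i0(1)] by blast
  next
    case True
    then have "Im (c i0) \<noteq> 0" using i0(2) complex_eq_iff by force
    then show ?thesis using eig_from_index[OF bij eqI i0(1)] by blast
  qed
qed


lemma arithA:
  fixes N K D :: real
  assumes N: "N \<ge> 6*K+12" and K: "K \<ge> 2" and D0: "D \<ge> 0" and D1: "D \<le> 2*K - 3"
    and Dc: "D = 0 \<or> D \<ge> 1"
  shows "(D+1)*(D+1-1/N) + N + D*N < (N + 2*K - 1)*(D+1-1/N)"
proof -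
  define e where "e = 1/N"
  have Npos: "N > 0" using N K by linarith
  have Ne: "N * e = 1" unfolding e_def using Npos by simp
  have e0: "e > 0" and e1: "e \<le> 1/4" unfolding e_def using Npos N K by (auto simp: field_simps)
  have key: "(2*K-2-D)*(D+1-e) > 1"
  proof (cases "D = 0")
    case True
    have "(2*K-2-D)*(D+1-e) = (2*K-2)*(1-e)" using True by simp
    also have "\<dots> \<ge> 2*(1-e)" using K e1 by (intro mult_right_mono) auto
    finally have "(2*K-2-D)*(D+1-e) \<ge> 2*(1-e)" .
    moreover have "2*(1-e) > 1" using e1 by simp
    ultimately show ?thesis by (meson less_le_trans)
  next
    case False
    then have "D \<ge> 1" using Dc by simp
    have a: "2*K-2-D \<ge> 1" using D1 by linarith
    have b: "D+1-e > 1" using \<open>D \<ge> 1\<close> e1 by linarith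
    have "(2*K-2-D)*(D+1-e) \<ge> 1*(D+1-e)" using a b by (intro mult_right_mono) auto
    then have "(2*K-2-D)*(D+1-e) \<ge> D+1-e" by simp
    then show ?thesis using b by (meson less_le_trans)
  qed
  have "(N + 2*K - 1)*(D+1-e) - ((D+1)*(D+1-e) + N + D*N) = (2*K-2-D)*(D+1-e) - N*e"
    by (simp add: algebra_simps)
  then show ?thesis using key Ne unfolding e_def by linarith
qed

lemma arithB:
  fixes N K D :: real
  assumes N: "N \<ge> 6*K+12" and K: "K \<ge> 2" and Dlo: "D \<ge> 2*K - 2" and Dhi: "D + 1 \<le> N"
    and Dc: "D + 1 = N \<or> D + 2 \<le> N"
  shows "(D+1)*(D+1-1/N) + N + ((2*K-3)*N + 1) + D*(1-1/N) < (N + 2*K - 1)*(D+1-1/N)"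
proof -
  define e where "e = 1/N"
  have Npos: "N > 0" using N K by linarith
  have Ne: "N * e = 1" unfolding e_def using Npos by simp
  have e0: "e > 0" unfolding e_def using Npos by simp
  define D1 where "D1 = D + 1"
  have id: "(N + 2*K - 1)*(D+1-e) - ((D+1)*(D+1-e) + N + ((2*K-3)*N + 1) + D*(1-e))
      = (D1 - 2*K + 2)*(N - D1) + (e*(2*D1) - N*e - e*(2*K))"
    unfolding D1_def by (simp add: algebra_simps)
  have pos: "(D1 - 2*K + 2)*(N - D1) + (e*(2*D1) - N*e - e*(2*K)) > 0"
  proof (cases "D1 = N")
    case True
    have "e*(2*D1) - N*e - e*(2*K) = e*(N - 2*K)" using True by (simp add: algebra_simps)
    moreover have "e*(N - 2*K) > 0" using e0 N K by (intro mult_pos_pos) auto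
    ultimately show ?thesis using True by simp
  next
    case False
    then have h1: "N - D1 \<ge> 1" using Dc unfolding D1_def by linarith
    have h2: "D1 - 2*K + 2 \<ge> 1" using Dlo unfolding D1_def by linarith
    have "(D1 - 2*K + 2)*(N - D1) \<ge> (D1 - 2*K + 2)*1" using h1 h2 by (intro mult_left_mono) auto
    moreover have "e*(2*D1) \<ge> e*(4*K - 2)" using e0 Dlo unfolding D1_def by (intro mult_left_mono) auto
    moreover have "e*(4*K-2) - N*e - e*(2*K) = e*(2*K - 2) - 1" using Ne by (simp add: algebra_simps)
    moreover have "e*(2*K-2) > 0" using e0 K by (intro mult_pos_pos) auto
    ultimately show ?thesis using h2
      by (smt (verit))
  qed
  show ?thesis using id pos unfolding e_def by linarith
qed


locale gs =
  fixes V :: "'a set" and E :: "'a set set" and w :: 'a and k :: nat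
  assumes sg: "simple_graph V E" and k2: "k \<ge> 2" and wV: "w \<in> V"
    and compcond: "\<forall>C\<in>components (del_vertex_V V w) (del_vertex_E E w).
           card C = 2 * k \<or> edges_in (del_vertex_E E w) C \<le> (k - 1) * card C"
    and big: "card V \<ge> 6 * k + 13"
begin

definition V' where "V' = V - {w}"
definition E' where "E' = {e\<in>E. w \<notin> e}"
definition nb where "nb u = {v\<in>V'. {u,v} \<in> E'}"
definition rel where "rel = (\<lambda>a b. a \<in> V' \<and> b \<in> V' \<and> adj E' a b)"
definition comp where "comp u = {v\<in>V'. rel\<^sup>*\<^sup>* u v}"
definition dg where "dg u = degree E' u"

lemma finV: "finite V" using sg unfolding simple_graph_def by simp
lemma EsubV: "e \<in> E \<Longrightarrow> e \<subseteq> V" using sg unfolding simple_graph_def by simp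
lemma finE: "finite E"
proof -
  have "E \<subseteq> Pow V" using EsubV by blast
  then show ?thesis using finV finite_subset by blast
qed
lemma finE': "finite E'" unfolding E'_def using finE by simp
lemma finV': "finite V'" unfolding V'_def using finV by simp
lemma E'sub: "E' \<subseteq> E" unfolding E'_def by auto

lemma edge_form: assumes e: "e \<in> E" shows "\<exists>a b. e = {a,b} \<and> a \<noteq> b \<and> a \<in> V \<and> b \<in> V"
proof -
  have "card e = 2" using sg e unfolding simple_graph_def by simp
  then obtain a b where ab: "e = {a,b}" "a \<noteq> b" by (auto simp: card_2_iff)
  have "a \<in> V" "b \<in> V" using EsubV[OF e] ab by auto
  then show ?thesis using ab by blast
qed

lemma edge_pair: "{u,v} \<in> E \<Longrightarrow> u \<noteq> v \<and> u \<in> V \<and> v \<in> V"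
proof -
  assume e: "{u,v} \<in> E"
  then have "card {u,v} = 2" using sg unfolding simple_graph_def by simp
  then have "u \<noteq> v" by (cases "u = v") auto
  then show ?thesis using EsubV[OF e] by auto
qed

lemma nb_sub: "u \<in> V' \<Longrightarrow> nb u \<subseteq> V' - {u}"
  unfolding nb_def E'_def using edge_pair by auto

lemma card_nb: assumes u: "u \<in> V'" shows "card (nb u) = dg u"
proof -
  have "bij_betw (\<lambda>v. {u,v}) (nb u) {e\<in>E'. u \<in> e}"
  proof (rule bij_betwI')
    fix x y assume "x \<in> nb u" "y \<in> nb u"
    then show "({u, x} = {u, y}) = (x = y)" by (metis doubleton_eq_iff)
  next
    fix x assume "x \<in> nb u" then show "{u, x} \<in> {e \<in> E'. u \<in> e}" unfolding nb_def by auto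
  next
    fix e assume e: "e \<in> {e \<in> E'. u \<in> e}"
    then have eE: "e \<in> E" and we: "w \<notin> e" and ue: "u \<in> e" unfolding E'_def by auto
    obtain a b where ab: "e = {a,b}" "a \<noteq> b" "a \<in> V" "b \<in> V" using edge_form[OF eE] by blast
    show "\<exists>x\<in>nb u. e = {u, x}"
    proof (cases "u = a")
      case True
      then have "b \<in> nb u" using ab we e unfolding nb_def V'_def by auto
      then show ?thesis using ab True by blast
    next
      case False
      then have "u = b" using ab ue by auto
      then have "a \<in> nb u" using ab we e unfolding nb_def V'_def by (auto simp: insert_commute)
      then show ?thesis using ab \<open>u = b\<close> by (auto simp: insert_commute)
    qed
  qed
  then show ?thesis unfolding dg_def degree_def by (simp add: bij_betw_same_card)
qed

lemma dg_le: "u \<in> V' \<Longrightarrow> dg u + 1 \<le> card V'"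
proof -
  assume u: "u \<in> V'"
  have "card (nb u) \<le> card (V' - {u})" using nb_sub[OF u] finV' by (intro card_mono) auto
  also have "\<dots> = card V' - 1" using u finV' by simp
  finally have "dg u \<le> card V' - 1" using card_nb[OF u] by simp
  moreover have "card V' \<ge> 1" using u finV' by (simp add: Suc_le_eq card_gt_0_iff) blast
  ultimately show ?thesis by linarith
qed

lemma rel_sym: "symp rel" unfolding rel_def adj_def symp_def by (auto simp: insert_commute)

lemma rtr_sym: "rel\<^sup>*\<^sup>* a b \<Longrightarrow> rel\<^sup>*\<^sup>* b a"
  using symp_rtranclp[OF rel_sym] by (auto dest: sympD)

lemma comp_self: "u \<in> V' \<Longrightarrow> u \<in> comp u" unfolding comp_def by simp

lemma comp_sub: "comp u \<subseteq> V'" unfolding comp_def by auto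

lemma comp_eq: assumes v: "v \<in> comp u" shows "comp v = comp u"
proof -
  have uv: "rel\<^sup>*\<^sup>* u v" using v unfolding comp_def by simp
  have vu: "rel\<^sup>*\<^sup>* v u" using rtr_sym[OF uv] .
  show ?thesis
  proof
    show "comp v \<subseteq> comp u" unfolding comp_def using uv by (auto intro: rtranclp_trans)
    show "comp u \<subseteq> comp v" unfolding comp_def using vu by (auto intro: rtranclp_trans)
  qed
qed

lemma nb_comp: "u \<in> V' \<Longrightarrow> nb u \<subseteq> comp u"
proof
  fix v assume u: "u \<in> V'" and v: "v \<in> nb u"
  then have "rel u v" using v unfolding nb_def rel_def adj_def by auto
  then show "v \<in> comp u" using v unfolding comp_def nb_def by auto
qed

lemma reach_eq: "reachable V' (del_vertex_E E w) = rel\<^sup>*\<^sup>*"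
  unfolding reachable_def rel_def del_vertex_V_def del_vertex_E_def V'_def E'_def by simp

lemma components_eq: "components (del_vertex_V V w) (del_vertex_E E w) = comp ` V'"
proof -
  have dv: "del_vertex_V V w = V'" unfolding del_vertex_V_def V'_def by simp
  show ?thesis unfolding components_def reach_eq dv comp_def by auto
qed

lemma comp_cond: "u \<in> V' \<Longrightarrow> card (comp u) = 2 * k \<or> edges_in E' (comp u) \<le> (k - 1) * card (comp u)"
  using compcond components_eq unfolding E'_def del_vertex_E_def by auto

lemma conn: assumes u: "u \<in> V'" and v: "v \<in> comp u" and vu: "v \<noteq> u" shows "dg v \<ge> 1"
proof -
  have "rel\<^sup>*\<^sup>* u v" using v unfolding comp_def by simp
  then obtain a where "rel a v" using vu by (metis rtranclp.cases)
  then have "a \<in> nb v" unfolding rel_def adj_def nb_def by (auto simp: insert_commute)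
  then have "nb v \<noteq> {}" by auto
  moreover have "finite (nb v)" unfolding nb_def using finV' by simp
  ultimately have "card (nb v) \<ge> 1" by (simp add: Suc_le_eq card_gt_0_iff)
  moreover have "v \<in> V'" using v comp_sub by blast
  ultimately show ?thesis using card_nb by metis
qed

lemma edge_in_comp: assumes v: "v \<in> V'" and e: "e \<in> E'" and ve: "v \<in> e" shows "e \<subseteq> comp v"
proof -
  have eE: "e \<in> E" and we: "w \<notin> e" using e unfolding E'_def by auto
  obtain a b where ab: "e = {a,b}" "a \<noteq> b" "a \<in> V" "b \<in> V" using edge_form[OF eE] by blast
  have aV: "a \<in> V'" and bV: "b \<in> V'" using ab we unfolding V'_def by auto
  show ?thesis
  proof (cases "v = a")
    case True
    then have "b \<in> nb v" using ab e bV unfolding nb_def by auto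
    then show ?thesis using nb_comp[OF v] comp_self[OF v] ab True by auto
  next
    case False
    then have vb: "v = b" using ab ve by auto
    then have "a \<in> nb v" using ab e aV unfolding nb_def by (auto simp: insert_commute)
    then show ?thesis using nb_comp[OF v] comp_self[OF v] ab vb by auto
  qed
qed

lemma handshake: assumes u: "u \<in> V'" shows "(\<Sum>v\<in>comp u. dg v) = 2 * edges_in E' (comp u)"
proof -
  define C where "C = comp u"
  define EC where "EC = {e\<in>E'. e \<subseteq> C}"
  have finC: "finite C" unfolding C_def using comp_sub finV' finite_subset by blast
  have finEC: "finite EC" unfolding EC_def using finE' by simp
  have dgv: "dg v = (\<Sum>e\<in>EC. if v \<in> e then 1 else 0)" if v: "v \<in> C" for v
  proof -
    have vV: "v \<in> V'" using v comp_sub unfolding C_def by blast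
    have cv: "comp v = C" using comp_eq v unfolding C_def by blast
    have "{e\<in>E'. v \<in> e} = {e\<in>EC. v \<in> e}"
      unfolding EC_def using edge_in_comp[OF vV] cv by auto
    then have "dg v = card {e\<in>EC. v \<in> e}" unfolding dg_def degree_def by simp
    also have "\<dots> = (\<Sum>e\<in>EC. if v \<in> e then 1 else 0)"
      using finEC by (simp add: sum.If_cases Int_def)
    finally show ?thesis .
  qed
  have "(\<Sum>v\<in>C. dg v) = (\<Sum>v\<in>C. \<Sum>e\<in>EC. if v \<in> e then 1 else 0)"
    using dgv by simp
  also have "\<dots> = (\<Sum>e\<in>EC. \<Sum>v\<in>C. if v \<in> e then 1 else 0)" by (rule sum.swap)
  also have "\<dots> = (\<Sum>e\<in>EC. 2)"
  proof (rule sum.cong[OF refl])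
    fix e assume e: "e \<in> EC"
    then have eC: "e \<subseteq> C" and eE: "e \<in> E" unfolding EC_def E'_def by auto
    have "(\<Sum>v\<in>C. if v \<in> e then 1 else 0) = card {v\<in>C. v \<in> e}"
      using finC by (simp add: sum.If_cases Int_def)
    also have "{v\<in>C. v \<in> e} = e" using eC by auto
    also have "card e = 2" using sg eE unfolding simple_graph_def by simp
    finally show "(\<Sum>v\<in>C. if v \<in> e then 1 else 0) = (2::nat)" .
  qed
  also have "\<dots> = 2 * card EC" by simp
  finally show ?thesis unfolding edges_in_def EC_def C_def by simp
qed

lemma nb_sum: assumes u: "u \<in> V'"
  shows "(\<Sum>v\<in>nb u. dg v) + card (comp u) \<le> 2 * edges_in E' (comp u) + 1"
proof -
  define C where "C = comp u"
  have finC: "finite C" unfolding C_def using comp_sub finV' finite_subset by blast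
  have uC: "u \<in> C" unfolding C_def using comp_self[OF u] .
  have nbC: "nb u \<subseteq> C - {u}" unfolding C_def using nb_comp[OF u] nb_sub[OF u] by auto
  have s1: "(\<Sum>v\<in>C. dg v) = dg u + (\<Sum>v\<in>C - {u}. dg v)"
    using finC uC by (simp add: sum.remove)
  have s2: "(\<Sum>v\<in>C - {u}. dg v) = (\<Sum>v\<in>nb u. dg v) + (\<Sum>v\<in>(C - {u}) - nb u. dg v)"
    using finC nbC by (metis finite_Diff sum.subset_diff add.commute)
  have s3: "card ((C - {u}) - nb u) \<le> (\<Sum>v\<in>(C - {u}) - nb u. dg v)"
  proof -
    have "card ((C - {u}) - nb u) = (\<Sum>v\<in>(C - {u}) - nb u. 1)" by simp
    also have "\<dots> \<le> (\<Sum>v\<in>(C - {u}) - nb u. dg v)"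
      by (rule sum_mono) (use conn[OF u] in \<open>auto simp: C_def\<close>)
    finally show ?thesis .
  qed
  have c1: "card ((C - {u}) - nb u) = card C - 1 - dg u"
  proof -
    have "card ((C - {u}) - nb u) = card (C - {u}) - card (nb u)"
      using nbC finC by (meson card_Diff_subset finite_Diff finite_subset)
    then show ?thesis using card_nb[OF u] finC uC by simp
  qed
  have dgle: "dg u + 1 \<le> card C"
  proof -
    have "card (nb u) \<le> card (C - {u})" using nbC finC by (intro card_mono) auto
    then show ?thesis using card_nb[OF u] finC uC
      by (metis One_nat_def Suc_le_eq card_Diff_singleton card_gt_0_iff diff_Suc_1 empty_iff le_diff_conv2 less_Suc_eq_le)
  qed
  have "(\<Sum>v\<in>C. dg v) = 2 * edges_in E' C" using handshake[OF u] unfolding C_def .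
  then show ?thesis using s1 s2 s3 c1 dgle unfolding C_def[symmetric] by linarith
qed

lemma deg_u: assumes u: "u \<in> V'" shows "degree E u \<le> dg u + 1"
proof -
  have "{e\<in>E. u \<in> e} \<subseteq> insert {u,w} {e\<in>E'. u \<in> e}"
  proof
    fix e assume e: "e \<in> {e\<in>E. u \<in> e}"
    show "e \<in> insert {u,w} {e\<in>E'. u \<in> e}"
    proof (cases "w \<in> e")
      case True
      obtain a b where ab: "e = {a,b}" "a \<noteq> b" using edge_form e by blast
      have "u \<noteq> w" using u unfolding V'_def by auto
      then have "e = {u,w}" using ab True e by auto
      then show ?thesis by simp
    next
      case False then show ?thesis using e unfolding E'_def by auto
    qed
  qed
  then have "card {e\<in>E. u \<in> e} \<le> card (insert {u,w} {e\<in>E'. u \<in> e})"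
    using finE' by (intro card_mono) auto
  also have "\<dots> \<le> Suc (card {e\<in>E'. u \<in> e})" using finE' by (simp add: card_insert_if)
  finally show ?thesis unfolding degree_def dg_def by simp
qed

lemma deg_w: "degree E w \<le> card V'"
proof -
  have "{e\<in>E. w \<in> e} \<subseteq> (\<lambda>v. {w,v}) ` V'"
  proof
    fix e assume e: "e \<in> {e\<in>E. w \<in> e}"
    obtain a b where ab: "e = {a,b}" "a \<noteq> b" "a \<in> V" "b \<in> V" using edge_form e by blast
    show "e \<in> (\<lambda>v. {w,v}) ` V'"
    proof (cases "a = w")
      case True then show ?thesis using ab unfolding V'_def by auto
    next
      case False then have "b = w" using ab e by auto
      then show ?thesis using ab False unfolding V'_def by (auto simp: insert_commute)
    qed
  qed
  then have "card {e\<in>E. w \<in> e} \<le> card ((\<lambda>v. {w,v}) ` V')" using finV' by (intro card_mono) auto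
  also have "\<dots> \<le> card V'" by (rule card_image_le[OF finV'])
  finally show ?thesis unfolding degree_def .
qed

lemma adj_u: assumes u: "u \<in> V'" shows "{v\<in>V. adj E u v} \<subseteq> insert w (nb u)"
  using u edge_pair unfolding adj_def nb_def E'_def V'_def by auto

lemma adj_w: "{v\<in>V. adj E w v} \<subseteq> V'"
  using edge_pair unfolding adj_def V'_def by auto

lemma row_expr: assumes u: "u \<in> V"
  shows "(\<Sum>v\<in>V. signless_laplacian E u v * z v) = real (degree E u) * z u + (\<Sum>v\<in>{v\<in>V. adj E u v}. z v)"
proof -
  have nadj: "\<not> adj E u u"
  proof
    assume "adj E u u" then have "{u,u} \<in> E" unfolding adj_def .
    then show False using edge_pair by blast
  qed
  have "(\<Sum>v\<in>V. signless_laplacian E u v * z v)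
        = (\<Sum>v\<in>V. (if u = v then real (degree E u) * z v else 0) + (if adj E u v then z v else 0))"
    unfolding signless_laplacian_def by (rule sum.cong) (auto simp: algebra_simps)
  also have "\<dots> = real (degree E u) * z u + (\<Sum>v\<in>V. if adj E u v then z v else 0)"
    using u finV by (simp add: sum.distrib)
  also have "(\<Sum>v\<in>V. if adj E u v then z v else 0) = (\<Sum>v\<in>{v\<in>V. adj E u v}. z v)"
    using finV by (simp add: sum.inter_filter)
  finally show ?thesis .
qed

definition NN where "NN = real (card V')"
definition zz where "zz v = (if v = w then NN else if card (comp v) = 2*k then 2 else real (dg v) + 1 - 1/NN)"

lemma cardV': "card V' = card V - 1" unfolding V'_def using wV finV by simp

lemma NN_big: "NN \<ge> 6 * real k + 12"
  unfolding NN_def cardV' using big by linarith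

lemma NN_pos: "NN > 0" using NN_big by linarith

lemma zz_V': "v \<in> V' \<Longrightarrow> zz v = (if card (comp v) = 2*k then 2 else real (dg v) + 1 - 1/NN)"
  unfolding zz_def V'_def by auto

lemma zz_pos: assumes v: "v \<in> V" shows "zz v > 0"
proof (cases "v = w")
  case True then show ?thesis using NN_pos unfolding zz_def by simp
next
  case False
  have "1/NN < 1" using NN_big by simp
  then show ?thesis using False unfolding zz_def by auto
qed

lemma zz_le: assumes v: "v \<in> V'" shows "zz v \<le> NN"
proof -
  have a: "real (dg v) + 1 \<le> NN" using dg_le[OF v] unfolding NN_def by linarith
  have b: "1/NN > 0" using NN_pos by simp
  have c: "(2::real) \<le> NN" using NN_big by linarith
  have d: "real (dg v) + 1 - 1/NN \<le> NN" using a b by linarith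
  show ?thesis using c d zz_V'[OF v] by simp
qed

lemma finC: "finite (comp u)" using comp_sub finV' finite_subset by blast

lemma comp_sum: assumes u: "u \<in> V'"
  shows "(\<Sum>v\<in>comp u. zz v) \<le> (2 * real k - 1 - 1/NN) * real (card (comp u))"
proof -
  define C where "C = comp u"
  have zC: "zz v = (if card C = 2*k then 2 else real (dg v) + 1 - 1/NN)" if v: "v \<in> C" for v
  proof -
    have "v \<in> V'" using v comp_sub unfolding C_def by blast
    moreover have "comp v = C" using comp_eq v unfolding C_def by blast
    ultimately show ?thesis using zz_V' by simp
  qed
  have inv: "1/NN \<le> 1" using NN_big by simp
  show ?thesis
  proof (cases "card C = 2*k")
    case True
    then have "(\<Sum>v\<in>C. zz v) = (\<Sum>v\<in>C. 2)" using zC by simp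
    also have "\<dots> = 2 * real (card C)" by simp
    also have "\<dots> \<le> (2 * real k - 1 - 1/NN) * real (card C)"
      using k2 inv by (intro mult_right_mono) auto
    finally show ?thesis unfolding C_def .
  next
    case False
    then have sp: "edges_in E' C \<le> (k - 1) * card C" using comp_cond[OF u] unfolding C_def by simp
    have "(\<Sum>v\<in>C. zz v) = (\<Sum>v\<in>C. real (dg v) + (1 - 1/NN))"
      by (intro sum.cong refl) (simp add: zC False)
    also have "\<dots> = real (\<Sum>v\<in>C. dg v) + (1 - 1/NN) * real (card C)"
      by (simp add: sum.distrib)
    also have "(\<Sum>v\<in>C. dg v) = 2 * edges_in E' C" using handshake[OF u] unfolding C_def .
    also have "real (2 * edges_in E' C) \<le> 2 * (real k - 1) * real (card C)"
    proof -
      have "real (edges_in E' C) \<le> real ((k - 1) * card C)" using sp by linarith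
      also have "\<dots> = (real k - 1) * real (card C)" using k2 by (simp add: of_nat_diff)
      finally show ?thesis by (simp add: algebra_simps)
    qed
    finally show ?thesis unfolding C_def by (simp add: algebra_simps)
  qed
qed

lemma sum_V': "(\<Sum>v\<in>V'. zz v) \<le> (2 * real k - 1 - 1/NN) * NN"
proof -
  define CC where "CC = comp ` V'"
  have U: "\<Union>CC = V'" unfolding CC_def using comp_sub comp_self by blast
  have finCC: "finite CC" unfolding CC_def using finV' by simp
  have fin: "\<forall>A\<in>CC. finite A" unfolding CC_def using finC by blast
  have disj: "\<forall>A\<in>CC. \<forall>B\<in>CC. A \<noteq> B \<longrightarrow> A \<inter> B = {}"
  proof (intro ballI impI)
    fix A B assume A: "A \<in> CC" and B: "B \<in> CC" and AB: "A \<noteq> B"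
    obtain a b where a: "A = comp a" and b: "B = comp b" using A B unfolding CC_def by blast
    show "A \<inter> B = {}"
    proof (rule ccontr)
      assume "A \<inter> B \<noteq> {}"
      then obtain x where "x \<in> comp a" "x \<in> comp b" using a b by blast
      then have "comp a = comp b" using comp_eq by metis
      then show False using AB a b by simp
    qed
  qed
  have "(\<Sum>v\<in>V'. zz v) = (\<Sum>A\<in>CC. \<Sum>v\<in>A. zz v)"
    using sum.Union_disjoint[OF fin disj, of zz] U by simp
  also have "\<dots> \<le> (\<Sum>A\<in>CC. (2 * real k - 1 - 1/NN) * real (card A))"
  proof (rule sum_mono)
    fix A assume "A \<in> CC"
    then obtain a where "a \<in> V'" "A = comp a" unfolding CC_def by blast
    then show "(\<Sum>v\<in>A. zz v) \<le> (2 * real k - 1 - 1/NN) * real (card A)" using comp_sum by simp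
  qed
  also have "\<dots> = (2 * real k - 1 - 1/NN) * real (\<Sum>A\<in>CC. card A)"
    by (simp add: sum_distrib_left)
  also have "(\<Sum>A\<in>CC. card A) = card V'"
    using sum.Union_disjoint[OF fin disj, of "\<lambda>_. 1::nat"] U by simp
  finally show ?thesis unfolding NN_def .
qed

lemma zz_nonneg: "v \<in> V \<Longrightarrow> zz v \<ge> 0" using zz_pos less_imp_le by blast

lemma finnb: "finite (nb u)" unfolding nb_def using finV' by simp

lemma adj_sum_u: assumes u: "u \<in> V'"
  shows "(\<Sum>v\<in>{v\<in>V. adj E u v}. zz v) \<le> zz w + (\<Sum>v\<in>nb u. zz v)"
proof -
  have sub: "{v\<in>V. adj E u v} \<subseteq> insert w (nb u)" using adj_u[OF u] .
  have ins: "insert w (nb u) \<subseteq> V" using wV nb_sub[OF u] unfolding V'_def by auto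
  have "(\<Sum>v\<in>{v\<in>V. adj E u v}. zz v) \<le> (\<Sum>v\<in>insert w (nb u). zz v)"
    by (rule sum_mono2) (use finnb sub ins zz_nonneg in auto)
  also have "\<dots> = zz w + (\<Sum>v\<in>nb u. zz v)"
    using finnb nb_sub[OF u] unfolding V'_def by (subst sum.insert) auto
  finally show ?thesis .
qed

lemma adj_sum_w: "(\<Sum>v\<in>{v\<in>V. adj E w v}. zz v) \<le> (\<Sum>v\<in>V'. zz v)"
  by (rule sum_mono2) (use finV' adj_w zz_nonneg in \<open>auto simp: V'_def\<close>)

lemma row_w: "(\<Sum>v\<in>V. signless_laplacian E w v * zz v) < (NN + 2 * real k - 1) * zz w"
proof -
  have "(\<Sum>v\<in>V. signless_laplacian E w v * zz v) = real (degree E w) * zz w + (\<Sum>v\<in>{v\<in>V. adj E w v}. zz v)"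
    by (rule row_expr[OF wV])
  also have "\<dots> \<le> NN * NN + (2 * real k - 1 - 1/NN) * NN"
  proof (rule add_mono)
    have "real (degree E w) \<le> NN" using deg_w unfolding NN_def by simp
    then show "real (degree E w) * zz w \<le> NN * NN" using NN_pos unfolding zz_def
      by (simp add: mult_right_mono)
    show "(\<Sum>v\<in>{v\<in>V. adj E w v}. zz v) \<le> (2 * real k - 1 - 1/NN) * NN"
      using adj_sum_w sum_V' by linarith
  qed
  also have "\<dots> = NN * NN + (2 * real k - 1) * NN - 1" using NN_pos by (simp add: algebra_simps)
  also have "\<dots> < (NN + 2 * real k - 1) * zz w" unfolding zz_def by (simp add: algebra_simps)
  finally show ?thesis .
qed

lemma row_dense: assumes u: "u \<in> V'" and dn: "card (comp u) = 2*k"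
  shows "(\<Sum>v\<in>V. signless_laplacian E u v * zz v) < (NN + 2 * real k - 1) * zz u"
proof -
  have uV: "u \<in> V" using u unfolding V'_def by auto
  have zu: "zz u = 2" using zz_V'[OF u] dn by simp
  have znb: "(\<Sum>v\<in>nb u. zz v) = 2 * real (dg u)"
  proof -
    have "(\<Sum>v\<in>nb u. zz v) = (\<Sum>v\<in>nb u. 2)"
    proof (rule sum.cong[OF refl])
      fix v assume v: "v \<in> nb u"
      then have "v \<in> V'" "comp v = comp u" using nb_sub[OF u] nb_comp[OF u] comp_eq by auto
      then show "zz v = 2" using zz_V' dn by simp
    qed
    then show ?thesis using card_nb[OF u] by simp
  qed
  have dgb: "dg u + 1 \<le> 2*k"
  proof -
    have "nb u \<subseteq> comp u - {u}" using nb_sub[OF u] nb_comp[OF u] by auto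
    then have "card (nb u) \<le> card (comp u - {u})" using finC by (intro card_mono) auto
    also have "\<dots> = card (comp u) - 1" using comp_self[OF u] finC by simp
    finally show ?thesis using card_nb[OF u] dn k2 by simp
  qed
  have "(\<Sum>v\<in>V. signless_laplacian E u v * zz v) = real (degree E u) * zz u + (\<Sum>v\<in>{v\<in>V. adj E u v}. zz v)"
    by (rule row_expr[OF uV])
  also have "\<dots> \<le> (real (dg u) + 1) * 2 + (NN + 2 * real (dg u))"
  proof (rule add_mono)
    show "real (degree E u) * zz u \<le> (real (dg u) + 1) * 2"
      using deg_u[OF u] zu by simp
    show "(\<Sum>v\<in>{v\<in>V. adj E u v}. zz v) \<le> NN + 2 * real (dg u)"
      using adj_sum_u[OF u] znb unfolding zz_def by simp
  qed
  also have "\<dots> < (NN + 2 * real k - 1) * zz u"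
  proof -
    have "real (dg u) + 1 \<le> 2 * real k" using dgb by linarith
    then show ?thesis using zu NN_big by simp
  qed
  finally show ?thesis .
qed

lemma row_sparse: assumes u: "u \<in> V'" and sp: "card (comp u) \<noteq> 2*k"
  shows "(\<Sum>v\<in>V. signless_laplacian E u v * zz v) < (NN + 2 * real k - 1) * zz u"
proof -
  have uV: "u \<in> V" using u unfolding V'_def by auto
  define D where "D = real (dg u)"
  have zu: "zz u = D + 1 - 1/NN" using zz_V'[OF u] sp unfolding D_def by simp
  have zupos: "zz u > 0" using zz_pos[OF uV] .
  have znb: "(\<Sum>v\<in>nb u. zz v) = real (\<Sum>v\<in>nb u. dg v) + D * (1 - 1/NN)"
  proof -
    have "(\<Sum>v\<in>nb u. zz v) = (\<Sum>v\<in>nb u. real (dg v) + (1 - 1/NN))"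
    proof (rule sum.cong[OF refl])
      fix v assume v: "v \<in> nb u"
      then have "v \<in> V'" "comp v = comp u" using nb_sub[OF u] nb_comp[OF u] comp_eq by auto
      then show "zz v = real (dg v) + (1 - 1/NN)" using zz_V' sp by simp
    qed
    also have "\<dots> = real (\<Sum>v\<in>nb u. dg v) + real (card (nb u)) * (1 - 1/NN)"
      by (simp add: sum.distrib)
    finally show ?thesis using card_nb[OF u] unfolding D_def by simp
  qed
  have base: "(\<Sum>v\<in>V. signless_laplacian E u v * zz v) \<le> (D + 1) * zz u + NN + (\<Sum>v\<in>nb u. zz v)"
  proof -
    have "(\<Sum>v\<in>V. signless_laplacian E u v * zz v) = real (degree E u) * zz u + (\<Sum>v\<in>{v\<in>V. adj E u v}. zz v)"
      by (rule row_expr[OF uV])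
    moreover have "real (degree E u) * zz u \<le> (D + 1) * zz u"
      using deg_u[OF u] zupos unfolding D_def by (intro mult_right_mono) auto
    moreover have "(\<Sum>v\<in>{v\<in>V. adj E u v}. zz v) \<le> NN + (\<Sum>v\<in>nb u. zz v)"
      using adj_sum_u[OF u] unfolding zz_def by simp
    ultimately show ?thesis by linarith
  qed
  have Dhi: "D + 1 \<le> NN" using dg_le[OF u] unfolding D_def NN_def by linarith
  have K: "real k \<ge> 2" using k2 by simp
  show ?thesis
  proof (cases "dg u + 3 \<le> 2 * k")
    case True
    have "real (dg u + 3) \<le> real (2 * k)" using True by (simp only: of_nat_le_iff)
    then have Dlo: "D \<le> 2 * real k - 3" unfolding D_def by simp
    have "(\<Sum>v\<in>nb u. zz v) \<le> (\<Sum>v\<in>nb u. NN)"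
      by (rule sum_mono) (use zz_le nb_sub[OF u] in auto)
    also have "\<dots> = D * NN" using card_nb[OF u] unfolding D_def by simp
    finally have "(\<Sum>v\<in>V. signless_laplacian E u v * zz v) \<le> (D+1)*(D+1-1/NN) + NN + D*NN"
      using base zu by simp
    also have "\<dots> < (NN + 2 * real k - 1) * (D+1-1/NN)"
    proof (rule arithA[OF NN_big K])
      show "0 \<le> D" "D \<le> 2 * real k - 3" "D = 0 \<or> 1 \<le> D" using Dlo unfolding D_def by auto
    qed
    finally show ?thesis using zu by simp
  next
    case False
    have "real (2 * k) \<le> real (dg u + 2)" using False by (subst of_nat_le_iff) linarith
    then have Dlo: "D \<ge> 2 * real k - 2" unfolding D_def by simp
    have sparse: "edges_in E' (comp u) \<le> (k - 1) * card (comp u)" using comp_cond[OF u] sp by simp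
    have cle: "card (comp u) \<le> card V'" using comp_sub finV' by (intro card_mono) auto
    have "real (\<Sum>v\<in>nb u. dg v) \<le> (2 * real k - 3) * NN + 1"
    proof -
      have a: "real (\<Sum>v\<in>nb u. dg v) + real (card (comp u)) \<le> 2 * real (edges_in E' (comp u)) + 1"
        using nb_sum[OF u] by linarith
      have b: "real (edges_in E' (comp u)) \<le> (real k - 1) * real (card (comp u))"
      proof -
        have "real (edges_in E' (comp u)) \<le> real ((k - 1) * card (comp u))" using sparse by linarith
        also have "\<dots> = (real k - 1) * real (card (comp u))" using k2 by (simp add: of_nat_diff)
        finally show ?thesis .
      qed
      have c: "(2 * real k - 3) * real (card (comp u)) \<le> (2 * real k - 3) * NN"
        using cle K unfolding NN_def by (intro mult_left_mono) auto
      show ?thesis using a b c by (simp add: algebra_simps)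
    qed
    then have "(\<Sum>v\<in>V. signless_laplacian E u v * zz v) \<le> (D+1)*(D+1-1/NN) + NN + ((2 * real k - 3) * NN + 1) + D*(1-1/NN)"
      using base zu znb by simp
    also have "\<dots> < (NN + 2 * real k - 1) * (D+1-1/NN)"
    proof (rule arithB[OF NN_big K Dlo Dhi])
      have "dg u + 1 = card V' \<or> dg u + 2 \<le> card V'" using dg_le[OF u] by linarith
      then show "D + 1 = NN \<or> D + 2 \<le> NN" unfolding D_def NN_def
      proof
        assume "dg u + 1 = card V'"
        then have "real (dg u + 1) = real (card V')" by simp
        then show "real (dg u) + 1 = real (card V') \<or> real (dg u) + 2 \<le> real (card V')" by simp
      next
        assume "dg u + 2 \<le> card V'"
        then have "real (dg u + 2) \<le> real (card V')" by (subst of_nat_le_iff)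
        then show "real (dg u) + 1 = real (card V') \<or> real (dg u) + 2 \<le> real (card V')" by simp
      qed
    qed
    finally show ?thesis using zu by simp
  qed
qed

lemma rows: "u \<in> V \<Longrightarrow> (\<Sum>v\<in>V. signless_laplacian E u v * zz v) < (NN + 2 * real k - 1) * zz u"
proof -
  assume u: "u \<in> V"
  show ?thesis
  proof (cases "u = w")
    case True then show ?thesis using row_w by simp
  next
    case False
    then have u': "u \<in> V'" using u unfolding V'_def by auto
    show ?thesis using row_dense[OF u'] row_sparse[OF u'] by blast
  qed
qed

end


theorem corollary2:
  fixes V :: "'a set" and E :: "'a set set" and w :: 'a and k n :: nat
  assumes "simple_graph V E"
    and "k \<ge> 2"
    and "n = card V"
    and "w \<in> V"
    and "\<forall>C\<in>components (del_vertex_V V w) (del_vertex_E E w).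
           card C = 2 * k \<or> edges_in (del_vertex_E E w) C \<le> (k - 1) * card C"
    and "n \<ge> 6 * k + 13"
  shows "q_index V E < real n + 2 * real k - 2"
proof -
  interpret gs V E w k
  proof
    show "simple_graph V E" by (rule assms(1))
    show "2 \<le> k" by (rule assms(2))
    show "w \<in> V" by (rule assms(4))
    show "\<forall>C\<in>components (del_vertex_V V w) (del_vertex_E E w).
           card C = 2 * k \<or> edges_in (del_vertex_E E w) C \<le> (k - 1) * card C" by (rule assms(5))
    show "6 * k + 13 \<le> card V" using assms(3) assms(6) by simp
  qed
  define S where "S = {\<mu>. is_eigenvalue V (signless_laplacian E) \<mu>}"
  have ne: "V \<noteq> {}" using wV by blast
  have sym0: "signless_laplacian E u v = signless_laplacian E v u" for u v
  proof -
    have "{u,v} = {v,u}" by blast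
    then show ?thesis unfolding signless_laplacian_def adj_def by simp
  qed
  have symQ: "\<And>u v. u \<in> V \<Longrightarrow> v \<in> V \<Longrightarrow> signless_laplacian E u v = signless_laplacian E v u"
    by (rule sym0)
  have nonneg: "\<And>u v. u \<in> V \<Longrightarrow> v \<in> V \<Longrightarrow> signless_laplacian E u v \<ge> 0"
    unfolding signless_laplacian_def by auto
  have finS: "finite S" unfolding S_def by (rule eig_finite[OF finV])
  obtain \<mu>0 where mu0: "is_eigenvalue V (signless_laplacian E) \<mu>0"
  proof -
    have "\<exists>\<mu>. is_eigenvalue V (signless_laplacian E) \<mu>"
      by (rule eig_exists[OF finV ne]) (rule sym0)
    then show ?thesis using that by blast
  qed
  have "\<mu>0 \<in> S" unfolding S_def using mu0 by simp
  then have neS: "S \<noteq> {}" by auto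
  have qeq: "q_index V E = Max S" unfolding q_index_def S_def by (rule refl)
  have qS: "q_index V E \<in> S" unfolding qeq using Max_in[OF finS neS] .
  have "q_index V E < NN + 2 * real k - 1"
  proof (rule cw_bound[where M="signless_laplacian E", OF finV nonneg _ zz_pos rows])
    show "is_eigenvalue V (signless_laplacian E) (q_index V E)" using qS unfolding S_def by simp
  next
    fix u v assume "u \<in> V" "v \<in> V"
    show "signless_laplacian E u v = signless_laplacian E v u" by (rule sym0)
  qed
  moreover have "NN = real n - 1"
    unfolding NN_def cardV' using assms(3) assms(6) by (simp add: of_nat_diff)
  ultimately show ?thesis by simp
qed

end
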